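(* Let $n \geq 3$ and $m \geq 1$ be integers, let $\lambda_0 \geq 0 > \lambda_1 \geq \lambda_2 \geq \cdots \geq \lambda_n$ be real numbers, and let $z_1, \ldots, z_m$ be complex numbers with $z_j = a_j + b_j i$, where $a_j \in \mathbb{R}$ and $b_j > 0$ for $j = 1, \ldots, m$. If $$\lambda_0 + \sum_{j=1}^n \lambda_j - 2\sum_{j=1}^m |z_j| \geq 0,$$ then there is an $(n+2m+1) \times (n+2m+1)$ normal centrosymmetric nonnegative matrix whose eigenvalues are $\lambda_0, \lambda_1, \ldots, \lambda_n, z_1, \ldots, z_m, \overline{z}_1, \ldots, \overline{z}_m$.
   Context: A real square matrix is nonnegative if all its entries are nonnegative. For each size $k$, $J$ denotes the $k \times k$ reverse identity matrix (ones on the anti-diagonal, zeros elsewhere). A $k \times k$ matrix $A$ is centrosymmetric if $JAJ = A$. A matrix $A$ is normal if $AA^* = A^*A$. *)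

theory Defs
  imports "Jordan_Normal_Form.Matrix" "Jordan_Normal_Form.Char_Poly"
begin

definition rev_id_mat :: "nat \<Rightarrow> 'a :: {zero,one} mat" where
  "rev_id_mat k = mat k k (\<lambda>(i, j). if i + j = k - 1 then 1 else 0)"

definition centrosymmetric :: "'a :: comm_ring_1 mat \<Rightarrow> bool" where
  "centrosymmetric A \<longleftrightarrow> A \<in> carrier_mat (dim_row A) (dim_row A) \<and>
     rev_id_mat (dim_row A) * A * rev_id_mat (dim_row A) = A"

definition conj_transpose_mat :: "complex mat \<Rightarrow> complex mat" where
  "conj_transpose_mat A = transpose_mat (map_mat cnj A)"

definition normal_mat :: "complex mat \<Rightarrow> bool" where
  "normal_mat A \<longleftrightarrow> A * conj_transpose_mat A = conj_transpose_mat A * A"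

definition nonneg_mat :: "real mat \<Rightarrow> bool" where
  "nonneg_mat A \<longleftrightarrow> (\<forall>i < dim_row A. \<forall>j < dim_col A. A $$ (i, j) \<ge> 0)"

definition has_eigenvalues :: "complex mat \<Rightarrow> complex list \<Rightarrow> bool" where
  "has_eigenvalues A es \<longleftrightarrow> char_poly A = (\<Prod>e \<leftarrow> es. [:- e, 1:])"

end

theory Submission
  imports Defs
begin


definition ip :: "nat \<Rightarrow> (nat \<Rightarrow> complex) \<Rightarrow> (nat \<Rightarrow> complex) \<Rightarrow> complex" where
  "ip N x y = (\<Sum>i<N. cnj (x i) * y i)"

definition good :: "nat \<Rightarrow> (nat \<Rightarrow> nat \<Rightarrow> real) \<Rightarrow> real \<Rightarrow> (nat \<Rightarrow> real)
   \<Rightarrow> (complex \<times> (nat \<Rightarrow> complex)) list \<Rightarrow> bool" where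
  "good N M \<beta> u L \<longleftrightarrow>
   (\<forall>i<N. \<forall>j<N. 0 \<le> M i j) \<and>
   (\<forall>i<N. \<forall>j<N. M (N-1-i) (N-1-j) = M i j) \<and>
   (\<forall>i<N. 0 \<le> u i) \<and> (\<forall>i<N. u (N-1-i) = u i) \<and> (\<Sum>i<N. (u i)^2) = 1 \<and>
   (\<forall>i<N. (\<Sum>j<N. M i j * u j) = \<beta> * u i) \<and> 0 \<le> \<beta> \<and>
   length L + 1 = N \<and>
   (\<forall>p\<in>set L. \<forall>i<N. (\<Sum>j<N. complex_of_real (M i j) * snd p j) = fst p * snd p i) \<and>
   (\<forall>p\<in>set L. ip N (snd p) (snd p) = 1) \<and>
   sorted_wrt (\<lambda>p q. ip N (snd p) (snd q) = 0) L \<and>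
   (\<forall>p\<in>set L. (\<Sum>i<N. complex_of_real (u i) * snd p i) = 0)"

lemma ip_sym: "ip N y x = cnj (ip N x y)"
  unfolding ip_def by (simp add: cnj_sum mult.commute)

lemma conj_transpose_mult:
  assumes "X \<in> carrier_mat a b" "Y \<in> carrier_mat b c"
  shows "conj_transpose_mat (X * Y) = conj_transpose_mat Y * conj_transpose_mat X"
  using assms unfolding conj_transpose_mat_def
  by (intro eq_matI) (auto simp: scalar_prod_def cnj_sum mult.commute)

lemma conj_transpose_carrier[simp]:
  "X \<in> carrier_mat a b \<Longrightarrow> conj_transpose_mat X \<in> carrier_mat b a"
  unfolding conj_transpose_mat_def by auto

lemma conj_transpose_dims[simp]: "dim_row (conj_transpose_mat X) = dim_col X"
  "dim_col (conj_transpose_mat X) = dim_row X"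
  unfolding conj_transpose_mat_def by auto

lemma conj_transpose_twice[simp]: "conj_transpose_mat (conj_transpose_mat X) = X"
  unfolding conj_transpose_mat_def by (intro eq_matI) auto

lemma sum_rev_delta:
  assumes "i < (N::nat)"
  shows "(\<Sum>k<N. (if i + k = N - 1 then 1 else 0) * (f k :: 'a::comm_ring_1)) = f (N - 1 - i)"
proof -
  have "(\<Sum>k<N. (if i + k = N - 1 then 1 else 0) * f k) = (\<Sum>k<N. if k = N - 1 - i then f k else 0)"
  proof (intro sum.cong refl)
    fix k assume "k \<in> {..<N}"
    have "(i + k = N - 1) = (k = N - 1 - i)" using assms by linarith
    then show "(if i + k = N - 1 then 1 else 0) * f k = (if k = N - 1 - i then f k else 0)" by simp
  qed
  also have "\<dots> = f (N - 1 - i)" using assms by (simp add: sum.delta')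
  finally show ?thesis .
qed

lemma rev_id_mult_left:
  assumes "(X :: 'a :: comm_ring_1 mat) \<in> carrier_mat N c"
  shows "rev_id_mat N * X = mat N c (\<lambda>(i,j). X $$ (N-1-i, j))"
proof (rule eq_matI)
  fix i j assume ij: "i < dim_row (mat N c (\<lambda>(i,j). X $$ (N-1-i, j)))"
    "j < dim_col (mat N c (\<lambda>(i,j). X $$ (N-1-i, j)))"
  then have "i < N" "j < c" by auto
  have "(rev_id_mat N * X) $$ (i,j) = (\<Sum>k<N. (if i + k = N - 1 then 1 else 0) * X $$ (k, j))"
    using assms \<open>i<N\<close> \<open>j<c\<close> unfolding rev_id_mat_def
    by (auto simp: scalar_prod_def intro!: sum.cong)
  also have "\<dots> = X $$ (N-1-i, j)" by (rule sum_rev_delta[OF \<open>i<N\<close>])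
  finally show "(rev_id_mat N * X) $$ (i,j) = mat N c (\<lambda>(i,j). X $$ (N-1-i, j)) $$ (i,j)"
    using \<open>i<N\<close> \<open>j<c\<close> by simp
qed (use assms in \<open>auto simp: rev_id_mat_def\<close>)

lemma rev_id_mult_right:
  assumes "(X :: 'a :: comm_ring_1 mat) \<in> carrier_mat r N"
  shows "X * rev_id_mat N = mat r N (\<lambda>(i,j). X $$ (i, N-1-j))"
proof (rule eq_matI)
  fix i j assume ij: "i < dim_row (mat r N (\<lambda>(i,j). X $$ (i, N-1-j)))"
    "j < dim_col (mat r N (\<lambda>(i,j). X $$ (i, N-1-j)))"
  then have "i < r" "j < N" by auto
  have "(X * rev_id_mat N) $$ (i,j) = (\<Sum>k<N. (if j + k = N - 1 then 1 else 0) * X $$ (i, k))"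
    using assms \<open>i<r\<close> \<open>j<N\<close> unfolding rev_id_mat_def
    by (auto simp: scalar_prod_def add.commute intro!: sum.cong)
  also have "\<dots> = X $$ (i, N-1-j)" by (rule sum_rev_delta[OF \<open>j<N\<close>])
  finally show "(X * rev_id_mat N) $$ (i,j) = mat r N (\<lambda>(i,j). X $$ (i, N-1-j)) $$ (i,j)"
    using \<open>i<r\<close> \<open>j<N\<close> by simp
qed (use assms in \<open>auto simp: rev_id_mat_def\<close>)



lemma diag_mult_entry:
  assumes X: "X \<in> carrier_mat N N" and Y: "Y \<in> carrier_mat N N"
    and dX: "\<And>i j. i < N \<Longrightarrow> j < N \<Longrightarrow> i \<noteq> j \<Longrightarrow> X $$ (i,j) = (0::'a::comm_ring_1)"
    and dY: "\<And>i j. i < N \<Longrightarrow> j < N \<Longrightarrow> i \<noteq> j \<Longrightarrow> Y $$ (i,j) = 0"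
    and ij: "i < N" "j < N"
  shows "(X * Y) $$ (i,j) = (if i = j then X $$ (i,i) * Y $$ (i,i) else 0)"
proof -
  have "(X * Y) $$ (i,j) = (\<Sum>k\<in>{0..<N}. X $$ (i,k) * Y $$ (k,j))"
    using X Y ij by (simp add: scalar_prod_def)
  also have "\<dots> = (\<Sum>k\<in>{0..<N}. if k = i then X $$ (i,i) * Y $$ (i,j) else 0)"
    by (intro sum.cong refl) (use dX ij in auto)
  also have "\<dots> = X $$ (i,i) * Y $$ (i,j)" using ij by (simp add: sum.delta')
  also have "\<dots> = (if i = j then X $$ (i,i) * Y $$ (i,i) else 0)" using dY ij by auto
  finally show ?thesis .
qed

lemma conj_sandwich:
  assumes Q: "Q \<in> carrier_mat N N" and X: "X \<in> carrier_mat N N"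
    and Qh: "Qh \<in> carrier_mat N N"
    and QQ: "conj_transpose_mat Qh = Q"
  shows "conj_transpose_mat (Q * X * Qh) = Q * conj_transpose_mat X * Qh"
proof -
  have "conj_transpose_mat (Q * X * Qh) = conj_transpose_mat Qh * conj_transpose_mat (Q * X)"
    by (rule conj_transpose_mult[of _ N N _ N]) (use Q X Qh in auto)
  also have "conj_transpose_mat (Q * X) = conj_transpose_mat X * conj_transpose_mat Q"
    by (rule conj_transpose_mult[of _ N N _ N]) (use Q X in auto)
  also have "conj_transpose_mat Q = Qh" using QQ by (metis conj_transpose_twice)
  finally have "conj_transpose_mat (Q * X * Qh) = Q * (conj_transpose_mat X * Qh)" using QQ by simp
  also have "\<dots> = Q * conj_transpose_mat X * Qh"
    by (rule assoc_mult_mat[symmetric]) (use Q X Qh in auto)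
  finally show ?thesis .
qed

lemma sandwich_mult:
  assumes Q: "(Q :: complex mat) \<in> carrier_mat N N" and X: "X \<in> carrier_mat N N" and Y: "Y \<in> carrier_mat N N"
    and Qh: "Qh \<in> carrier_mat N N" and inv: "Qh * Q = 1\<^sub>m N"
  shows "(Q * X * Qh) * (Q * Y * Qh) = Q * (X * Y) * Qh"
proof -
  have h1: "Qh * (Q * Y * Qh) = Y * Qh"
  proof -
    have "Q * Y * Qh = Q * (Y * Qh)" by (rule assoc_mult_mat) (use Q Y Qh in auto)
    then have "Qh * (Q * Y * Qh) = (Qh * Q) * (Y * Qh)"
      using assoc_mult_mat[of Qh N N Q N "Y * Qh" N] Q Y Qh by simp
    also have "\<dots> = Y * Qh"
    proof -
      have "Y * Qh \<in> carrier_mat N N" using Y Qh by simp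
      then show ?thesis unfolding inv by (rule left_mult_one_mat)
    qed
    finally show ?thesis .
  qed
  have "(Q * X * Qh) * (Q * Y * Qh) = Q * X * (Qh * (Q * Y * Qh))"
    by (rule assoc_mult_mat) (use Q X Y Qh in auto)
  also have "\<dots> = Q * X * (Y * Qh)" unfolding h1 ..
  also have "\<dots> = Q * (X * (Y * Qh))" by (rule assoc_mult_mat) (use Q X Y Qh in auto)
  also have "X * (Y * Qh) = X * Y * Qh" by (rule assoc_mult_mat[symmetric]) (use Q X Y Qh in auto)
  also have "Q * (X * Y * Qh) = Q * (X * Y) * Qh" by (rule assoc_mult_mat[symmetric]) (use Q X Y Qh in auto)
  finally show ?thesis .
qed

lemma good_final:
  assumes g: "good N M \<beta> u L"
  defines "A \<equiv> mat N N (\<lambda>(i,j). M i j)"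
  shows "A \<in> carrier_mat N N \<and> nonneg_mat A \<and> centrosymmetric A \<and>
     normal_mat (map_mat complex_of_real A) \<and>
     has_eigenvalues (map_mat complex_of_real A) (complex_of_real \<beta> # map fst L)"
proof -
  from g have nn: "\<forall>i<N. \<forall>j<N. 0 \<le> M i j"
    and cs: "\<forall>i<N. \<forall>j<N. M (N-1-i) (N-1-j) = M i j"
    and u2: "(\<Sum>i<N. (u i)^2) = 1"
    and ue: "\<forall>i<N. (\<Sum>j<N. M i j * u j) = \<beta> * u i"
    and len: "length L + 1 = N"
    and Le: "\<forall>p\<in>set L. \<forall>i<N. (\<Sum>j<N. complex_of_real (M i j) * snd p j) = fst p * snd p i"
    and Ln: "\<forall>p\<in>set L. ip N (snd p) (snd p) = 1"
    and Lo: "sorted_wrt (\<lambda>p q. ip N (snd p) (snd q) = 0) L"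
    and uo: "\<forall>p\<in>set L. (\<Sum>i<N. complex_of_real (u i) * snd p i) = 0"
    unfolding good_def by auto
  have Acar: "A \<in> carrier_mat N N" unfolding A_def by simp
  have nonneg: "nonneg_mat A" unfolding nonneg_mat_def A_def using nn by auto
  have cs': "\<forall>i<N. \<forall>j<N. M (N - Suc i) (N - Suc j) = M i j" using cs by simp
  have centro: "centrosymmetric A"
  proof -
    have "rev_id_mat N * A * rev_id_mat N = A"
      unfolding rev_id_mult_left[OF Acar]
      by (subst rev_id_mult_right[of _ N]) (auto simp: A_def cs' intro!: eq_matI)
    then show ?thesis unfolding centrosymmetric_def using Acar by simp
  qed
  define LL where "LL = (complex_of_real \<beta>, \<lambda>i. complex_of_real (u i)) # L"
  define E where "E = map fst LL"
  define Q where "Q = mat N N (\<lambda>(i,k). snd (LL ! k) i)"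
  define Dg where "Dg = mat N N (\<lambda>(i,j). if i = j then E ! j else 0)"
  define Qh where "Qh = conj_transpose_mat Q"
  define Ac where "Ac = map_mat complex_of_real A"
  have lenLL: "length LL = N" using len unfolding LL_def by simp
  have lenE: "length E = N" using lenLL unfolding E_def by simp
  have Qc: "Q \<in> carrier_mat N N" unfolding Q_def by simp
  have Qhc: "Qh \<in> carrier_mat N N" unfolding Qh_def using Qc by simp
  have Dc: "Dg \<in> carrier_mat N N" unfolding Dg_def by simp
  have Acc: "Ac \<in> carrier_mat N N" unfolding Ac_def A_def by simp
  have ON: "ip N (snd (LL!k)) (snd (LL!l)) = (if k = l then 1 else 0)" if "k < N" "l < N" for k l
  proof -
    have lt: "ip N (snd (LL!k)) (snd (LL!l)) = 0" if kl: "k < l" "l < N" for k l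
    proof (cases k)
      case 0
      have "LL ! l \<in> set L" using kl len 0 unfolding LL_def by (cases l) auto
      then show ?thesis using uo 0 unfolding LL_def ip_def by simp
    next
      case (Suc k')
      then obtain l' where l': "l = Suc l'" using kl by (cases l) auto
      have "ip N (snd (L!k')) (snd (L!l')) = 0"
        using Lo kl len Suc l' unfolding sorted_wrt_iff_nth_less by auto
      then show ?thesis using Suc l' unfolding LL_def by simp
    qed
    show ?thesis
    proof (cases "k = l")
      case True
      show ?thesis
      proof (cases k)
        case 0
        have "ip N (snd (LL!k)) (snd (LL!k)) = complex_of_real (\<Sum>i<N. (u i)^2)"
          unfolding LL_def ip_def 0 by (simp add: power2_eq_square)
        then show ?thesis using True u2 by simp
      next
        case (Suc k')
        have "LL ! k \<in> set L" using Suc that len unfolding LL_def by auto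
        then show ?thesis using Ln True by auto
      qed
    next
      case False
      show ?thesis
      proof (cases "k < l")
        case True then show ?thesis using lt that by auto
      next
        case F: False
        then have "l < k" using False by auto
        then have "ip N (snd (LL!l)) (snd (LL!k)) = 0" using lt that by auto
        then show ?thesis using ip_sym[of N "snd (LL!k)" "snd (LL!l)"] False by simp
      qed
    qed
  qed
  have EV: "(\<Sum>j<N. complex_of_real (M i j) * snd (LL!k) j) = E ! k * snd (LL!k) i"
    if "k < N" "i < N" for k i
  proof (cases k)
    case 0
    have "(\<Sum>j<N. complex_of_real (M i j) * snd (LL!k) j) = complex_of_real (\<Sum>j<N. M i j * u j)"
      unfolding LL_def 0 by simp
    also have "\<dots> = complex_of_real (\<beta> * u i)" using ue that by simp
    finally show ?thesis unfolding E_def LL_def 0 by simp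
  next
    case (Suc k')
    have "LL ! k \<in> set L" using Suc that len unfolding LL_def by auto
    then show ?thesis using Le that unfolding E_def using lenLL by auto
  qed
  have QhQ: "Qh * Q = 1\<^sub>m N"
  proof (rule eq_matI)
    fix k l assume "k < dim_row (1\<^sub>m N :: complex mat)" "l < dim_col (1\<^sub>m N :: complex mat)"
    then have kl: "k < N" "l < N" by auto
    have "(Qh * Q) $$ (k,l) = (\<Sum>i\<in>{0..<N}. cnj (snd (LL!k) i) * snd (LL!l) i)"
      using kl Qc unfolding Qh_def conj_transpose_mat_def Q_def by (simp add: scalar_prod_def)
    also have "\<dots> = ip N (snd (LL!k)) (snd (LL!l))" unfolding ip_def by (simp add: atLeast0LessThan)
    finally show "(Qh * Q) $$ (k,l) = 1\<^sub>m N $$ (k,l)" using ON kl by simp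
  qed (use Qhc Qc in auto)
  have QQh: "Q * Qh = 1\<^sub>m N" by (rule mat_mult_left_right_inverse[OF Qhc Qc QhQ])
  have AQ: "Ac * Q = Q * Dg"
  proof (rule eq_matI)
    fix i k assume "i < dim_row (Q * Dg)" "k < dim_col (Q * Dg)"
    then have ik: "i < N" "k < N" using Qc Dc by auto
    have "(Ac * Q) $$ (i,k) = (\<Sum>j<N. complex_of_real (M i j) * snd (LL!k) j)"
      using ik unfolding Ac_def A_def Q_def by (simp add: scalar_prod_def atLeast0LessThan)
    also have "\<dots> = E ! k * snd (LL!k) i" using EV ik by simp
    also have "\<dots> = (\<Sum>j\<in>{0..<N}. if j = k then snd (LL!k) i * E ! k else 0)"
      using ik by (simp add: sum.delta')
    also have "\<dots> = (\<Sum>j\<in>{0..<N}. snd (LL ! j) i * (if j = k then E ! k else 0))"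
      by (intro sum.cong) auto
    also have "\<dots> = (Q * Dg) $$ (i,k)"
      using ik unfolding Q_def Dg_def by (simp add: scalar_prod_def)
    finally show "(Ac * Q) $$ (i,k) = (Q * Dg) $$ (i,k)" .
  qed (use Acc Qc Dc in auto)
  have Adec: "Ac = Q * Dg * Qh"
  proof -
    have "Ac = Ac * (Q * Qh)" using QQh Acc by simp
    also have "\<dots> = Ac * Q * Qh" by (rule assoc_mult_mat[symmetric]) (use Acc Qc Qhc in auto)
    finally show ?thesis using AQ by simp
  qed
  have sim: "similar_mat Ac Dg"
    by (rule similar_matI[of Ac Dg Q Qh N]) (use Acc Dc Qc Qhc QQh QhQ Adec in auto)
  have ut: "upper_triangular Dg" unfolding upper_triangular_def Dg_def by auto
  have dg: "diag_mat Dg = E" unfolding diag_mat_def Dg_def using lenE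
    by (auto intro!: nth_equalityI)
  have cp: "char_poly Ac = (\<Prod>a\<leftarrow>E. [:- a, 1:])"
    using char_poly_similar[OF sim] char_poly_upper_triangular[OF Dc ut] dg by simp
  have eig: "has_eigenvalues Ac (complex_of_real \<beta> # map fst L)"
    unfolding has_eigenvalues_def cp E_def LL_def by simp
  have Dh: "conj_transpose_mat Dg \<in> carrier_mat N N" using Dc by simp
  have QhQ': "conj_transpose_mat Qh = Q" unfolding Qh_def by simp
  have AH: "conj_transpose_mat Ac = Q * conj_transpose_mat Dg * Qh"
    unfolding Adec by (rule conj_sandwich[OF Qc Dc Qhc QhQ'])
  have dcomm: "Dg * conj_transpose_mat Dg = conj_transpose_mat Dg * Dg"
  proof (rule eq_matI)
    fix i j assume "i < dim_row (conj_transpose_mat Dg * Dg)" "j < dim_col (conj_transpose_mat Dg * Dg)"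
    then have ij: "i < N" "j < N" using Dc by auto
    have d1: "\<And>i j. i < N \<Longrightarrow> j < N \<Longrightarrow> i \<noteq> j \<Longrightarrow> Dg $$ (i,j) = 0" unfolding Dg_def by auto
    have d2: "\<And>i j. i < N \<Longrightarrow> j < N \<Longrightarrow> i \<noteq> j \<Longrightarrow> conj_transpose_mat Dg $$ (i,j) = 0"
      unfolding Dg_def conj_transpose_mat_def by auto
    show "(Dg * conj_transpose_mat Dg) $$ (i,j) = (conj_transpose_mat Dg * Dg) $$ (i,j)"
      using diag_mult_entry[OF Dc Dh d1 d2 ij] diag_mult_entry[OF Dh Dc d2 d1 ij]
      by (simp add: mult.commute)
  qed (use Dc in auto)
  have n1: "Ac * conj_transpose_mat Ac = Q * (Dg * conj_transpose_mat Dg) * Qh"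
    unfolding AH using sandwich_mult[OF Qc Dc Dh Qhc QhQ] Adec by simp
  have n2: "conj_transpose_mat Ac * Ac = Q * (conj_transpose_mat Dg * Dg) * Qh"
    unfolding AH using sandwich_mult[OF Qc Dh Dc Qhc QhQ] Adec by simp
  have normal: "normal_mat Ac"
    unfolding normal_mat_def n1 n2 dcomm ..
  show ?thesis using Acar nonneg centro normal eig unfolding Ac_def by simp
qed



definition outi :: "nat \<Rightarrow> nat \<Rightarrow> nat \<Rightarrow> nat" where "outi p c i = (if i < p then i else i - c)"
definition emb :: "nat \<Rightarrow> nat \<Rightarrow> nat \<Rightarrow> nat" where "emb p c k = (if k < p then k else k + c)"
definition mid :: "nat \<Rightarrow> nat \<Rightarrow> nat \<Rightarrow> bool" where "mid p c i \<longleftrightarrow> p \<le> i \<and> i < p + c"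

definition glueM :: "nat \<Rightarrow> nat \<Rightarrow> (nat\<Rightarrow>nat\<Rightarrow>real) \<Rightarrow> (nat\<Rightarrow>nat\<Rightarrow>real) \<Rightarrow> real
   \<Rightarrow> (nat\<Rightarrow>real) \<Rightarrow> (nat\<Rightarrow>real) \<Rightarrow> nat \<Rightarrow> nat \<Rightarrow> real" where
 "glueM p c B C \<rho> u v i j =
   (if mid p c i then (if mid p c j then C (i-p) (j-p) else \<rho> * v (i-p) * u (outi p c j))
    else (if mid p c j then \<rho> * u (outi p c i) * v (j-p) else B (outi p c i) (outi p c j)))"

definition padB :: "nat \<Rightarrow> nat \<Rightarrow> (nat \<Rightarrow> 'a::zero) \<Rightarrow> nat \<Rightarrow> 'a" where
  "padB p c w i = (if mid p c i then 0 else w (outi p c i))"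
definition padC :: "nat \<Rightarrow> nat \<Rightarrow> (nat \<Rightarrow> 'a::zero) \<Rightarrow> nat \<Rightarrow> 'a" where
  "padC p c y i = (if mid p c i then y (i-p) else 0)"

lemma emb_simps[simp]: "\<not> mid p c (emb p c k)" "outi p c (emb p c k) = k"
  unfolding mid_def emb_def outi_def by auto

lemma mid_simps[simp]: "j < c \<Longrightarrow> mid p c (p + j)" "p + j - p = j"
  unfolding mid_def by auto

lemma glue_entries[simp]:
  "glueM p c B C \<rho> u v (emb p c k) (emb p c k') = B k k'"
  "j < c \<Longrightarrow> glueM p c B C \<rho> u v (emb p c k) (p + j) = \<rho> * u k * v j"
  "j < c \<Longrightarrow> glueM p c B C \<rho> u v (p + j) (emb p c k) = \<rho> * v j * u k"
  "j < c \<Longrightarrow> j' < c \<Longrightarrow> glueM p c B C \<rho> u v (p + j) (p + j') = C j j'"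
  unfolding glueM_def by auto

lemma pad_simps[simp]:
  "padB p c w (emb p c k) = w k" "j < c \<Longrightarrow> padB p c w (p + j) = 0"
  "padC p c y (emb p c k) = 0" "j < c \<Longrightarrow> padC p c y (p + j) = y j"
  unfolding padB_def padC_def by auto

lemma sum_split_nat: "(\<Sum>i<a+(b::nat). f i) = (\<Sum>i<a. f i) + (\<Sum>i<b. f (a + i) :: 'a::comm_monoid_add)"
  by (induction b) (auto simp: add.assoc)

lemma sum_glue:
  "(\<Sum>i<2*p+c. f i) = (\<Sum>k<2*p. f (emb p c k)) + (\<Sum>j<c. f (p + j) :: 'a::comm_monoid_add)"
proof -
  have "(\<Sum>k<2*p. f (emb p c k)) = (\<Sum>k<p. f (emb p c k)) + (\<Sum>k<p. f (emb p c (p + k)))"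
    using sum_split_nat[of "\<lambda>k. f (emb p c k)" p p] by (simp add: mult_2)
  also have "\<dots> = (\<Sum>k<p. f k) + (\<Sum>k<p. f (p + c + k))"
    by (intro arg_cong2[where f="(+)"] sum.cong) (auto simp: emb_def add_ac)
  finally have e1: "(\<Sum>k<2*p. f (emb p c k)) = (\<Sum>k<p. f k) + (\<Sum>k<p. f (p + c + k))" .
  have "(\<Sum>i<2*p+c. f i) = (\<Sum>i<p+c+p. f i)" by (simp add: mult_2 add_ac)
  also have "\<dots> = (\<Sum>i<p+c. f i) + (\<Sum>k<p. f (p + c + k))" by (rule sum_split_nat)
  also have "(\<Sum>i<p+c. f i) = (\<Sum>i<p. f i) + (\<Sum>j<c. f (p + j))" by (rule sum_split_nat)
  finally show ?thesis using e1 by (simp add: add_ac)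
qed

lemma all_glue:
  assumes "\<And>k. k < 2*p \<Longrightarrow> P (emb p c k)" "\<And>j. j < c \<Longrightarrow> P (p + j)" "i < 2*p+c"
  shows "P i"
proof (cases "mid p c i")
  case True
  then have "i = p + (i - p)" "i - p < c" unfolding mid_def by auto
  then show ?thesis using assms(2) by metis
next
  case False
  then have "i = emb p c (outi p c i)" "outi p c i < 2*p" using assms(3)
    unfolding mid_def emb_def outi_def by auto
  then show ?thesis using assms(1) by metis
qed

lemma rev_emb: "k < 2*p \<Longrightarrow> 2*p + c - 1 - emb p c k = emb p c (2*p - 1 - k)"
  unfolding emb_def by auto

lemma rev_emb': "k < 2*p \<Longrightarrow> 2*p + c - Suc (emb p c k) = emb p c (2*p - Suc k)"
  unfolding emb_def by auto

lemma rev_mid': "j < (c::nat) \<Longrightarrow> 2*p + c - Suc (p + j) = p + (c - Suc j)"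
  by auto

lemma rev_mid: "j < (c::nat) \<Longrightarrow> 2*p + c - 1 - (p + j) = p + (c - 1 - j)"
  by auto

lemma all_glue2:
  assumes "\<And>k k'. k < 2*p \<Longrightarrow> k' < 2*p \<Longrightarrow> P (emb p c k) (emb p c k')"
    "\<And>k j. k < 2*p \<Longrightarrow> j < c \<Longrightarrow> P (emb p c k) (p + j)"
    "\<And>k j. k < 2*p \<Longrightarrow> j < c \<Longrightarrow> P (p + j) (emb p c k)"
    "\<And>j j'. j < c \<Longrightarrow> j' < c \<Longrightarrow> P (p + j) (p + j')"
    "i < 2*p+c" "j < 2*p+c"
  shows "P i j"
proof (rule all_glue[where P="\<lambda>i. P i j", OF _ _ assms(5)])
  fix k assume "k < 2*p"
  show "P (emb p c k) j" by (rule all_glue[OF _ _ assms(6)]) (use assms(1,2) \<open>k < 2*p\<close> in auto)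
next
  fix j' assume "j' < c"
  show "P (p + j') j" by (rule all_glue[OF _ _ assms(6)]) (use assms(3,4) \<open>j' < c\<close> in auto)
qed

lemma ip_padBB: "ip (2*p+c) (padB p c w) (padB p c w') = ip (2*p) w w'"
  unfolding ip_def by (simp add: sum_glue)
lemma ip_padCC: "ip (2*p+c) (padC p c y) (padC p c y') = ip c y y'"
  unfolding ip_def by (simp add: sum_glue)
lemma ip_padBC: "ip (2*p+c) (padB p c w) (padC p c y) = 0"
  unfolding ip_def by (simp add: sum_glue)
lemma ip_padCB: "ip (2*p+c) (padC p c y) (padB p c w) = 0"
  unfolding ip_def by (simp add: sum_glue)



lemma good_glue:
  assumes gB: "good (2*p) B \<beta> u LB" and gC: "good c C \<gamma> v LC" and lam: "lm < 0"
  defines "\<rho> \<equiv> sqrt ((\<beta> - lm) * (\<gamma> - lm))"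
    and "a \<equiv> sqrt ((\<beta> - lm) / (\<beta> + \<gamma> - 2*lm))"
    and "b \<equiv> sqrt ((\<gamma> - lm) / (\<beta> + \<gamma> - 2*lm))"
  shows "good (2*p + c) (glueM p c B C \<rho> u v) (\<beta> + \<gamma> - lm)
          (\<lambda>i. a * padB p c u i + b * padC p c v i)
          (map (\<lambda>q. (fst q, padB p c (snd q))) LB @ map (\<lambda>q. (fst q, padC p c (snd q))) LC @
           [(complex_of_real lm, \<lambda>i. complex_of_real (- b * padB p c u i + a * padC p c v i))])"
proof -
  let ?N = "2*p + c"
  let ?M = "glueM p c B C \<rho> u v"
  let ?u = "\<lambda>i. a * padB p c u i + b * padC p c v i"
  let ?x = "\<lambda>i. - b * padB p c u i + a * padC p c v i"
  from gB have Bnn: "\<forall>i<2*p. \<forall>j<2*p. 0 \<le> B i j"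
    and Bcs: "\<forall>i<2*p. \<forall>j<2*p. B (2*p-1-i) (2*p-1-j) = B i j"
    and unn: "\<forall>i<2*p. 0 \<le> u i" and usym: "\<forall>i<2*p. u (2*p-1-i) = u i"
    and u2: "(\<Sum>i<2*p. (u i)^2) = 1"
    and ue: "\<forall>i<2*p. (\<Sum>j<2*p. B i j * u j) = \<beta> * u i" and \<beta>0: "0 \<le> \<beta>"
    and lenB: "length LB + 1 = 2*p"
    and LBe: "\<forall>q\<in>set LB. \<forall>i<2*p. (\<Sum>j<2*p. complex_of_real (B i j) * snd q j) = fst q * snd q i"
    and LBn: "\<forall>q\<in>set LB. ip (2*p) (snd q) (snd q) = 1"
    and LBo: "sorted_wrt (\<lambda>q r. ip (2*p) (snd q) (snd r) = 0) LB"
    and uoB: "\<forall>q\<in>set LB. (\<Sum>i<2*p. complex_of_real (u i) * snd q i) = 0"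
    unfolding good_def by auto
  from gC have Cnn: "\<forall>i<c. \<forall>j<c. 0 \<le> C i j"
    and Ccs: "\<forall>i<c. \<forall>j<c. C (c-1-i) (c-1-j) = C i j"
    and vnn: "\<forall>i<c. 0 \<le> v i" and vsym: "\<forall>i<c. v (c-1-i) = v i"
    and v2: "(\<Sum>i<c. (v i)^2) = 1"
    and ve: "\<forall>i<c. (\<Sum>j<c. C i j * v j) = \<gamma> * v i" and \<gamma>0: "0 \<le> \<gamma>"
    and lenC: "length LC + 1 = c"
    and LCe: "\<forall>q\<in>set LC. \<forall>i<c. (\<Sum>j<c. complex_of_real (C i j) * snd q j) = fst q * snd q i"
    and LCn: "\<forall>q\<in>set LC. ip c (snd q) (snd q) = 1"
    and LCo: "sorted_wrt (\<lambda>q r. ip c (snd q) (snd r) = 0) LC"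
    and voC: "\<forall>q\<in>set LC. (\<Sum>i<c. complex_of_real (v i) * snd q i) = 0"
    unfolding good_def by auto
  have sp: "0 < \<beta> + \<gamma> - 2*lm" using \<beta>0 \<gamma>0 lam by simp
  have \<rho>0: "0 \<le> \<rho>" unfolding \<rho>_def using \<beta>0 \<gamma>0 lam by simp
  have a0: "0 \<le> a" and b0: "0 \<le> b" unfolding a_def b_def using \<beta>0 \<gamma>0 lam sp by simp_all
  have a2: "a^2 = (\<beta> - lm) / (\<beta> + \<gamma> - 2*lm)" unfolding a_def using \<beta>0 lam sp by simp
  have b2: "b^2 = (\<gamma> - lm) / (\<beta> + \<gamma> - 2*lm)" unfolding b_def using \<gamma>0 lam sp by simp
  have ab1: "a^2 + b^2 = 1"
  proof -
    have "a^2 + b^2 = ((\<beta> - lm) + (\<gamma> - lm)) / (\<beta> + \<gamma> - 2*lm)"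
      unfolding a2 b2 by (rule add_divide_distrib[symmetric])
    also have "(\<beta> - lm) + (\<gamma> - lm) = \<beta> + \<gamma> - 2*lm" by simp
    finally show ?thesis using sp by (metis divide_self less_irrefl)
  qed
  have R1: "\<rho> * b = (\<gamma> - lm) * a"
  proof -
    have "\<rho> * b = sqrt ((\<beta> - lm) * (\<gamma> - lm) * ((\<gamma> - lm) / (\<beta> + \<gamma> - 2*lm)))"
      unfolding \<rho>_def b_def by (rule real_sqrt_mult[symmetric])
    also have "(\<beta> - lm) * (\<gamma> - lm) * ((\<gamma> - lm) / (\<beta> + \<gamma> - 2*lm)) = (\<gamma> - lm)^2 * ((\<beta> - lm) / (\<beta> + \<gamma> - 2*lm))"
      by (simp add: power2_eq_square)
    also have "sqrt \<dots> = (\<gamma> - lm) * a" unfolding a_def using \<gamma>0 lam by (subst real_sqrt_mult) simp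
    finally show ?thesis .
  qed
  have R2: "\<rho> * a = (\<beta> - lm) * b"
  proof -
    have "\<rho> * a = sqrt ((\<beta> - lm) * (\<gamma> - lm) * ((\<beta> - lm) / (\<beta> + \<gamma> - 2*lm)))"
      unfolding \<rho>_def a_def by (rule real_sqrt_mult[symmetric])
    also have "(\<beta> - lm) * (\<gamma> - lm) * ((\<beta> - lm) / (\<beta> + \<gamma> - 2*lm)) = (\<beta> - lm)^2 * ((\<gamma> - lm) / (\<beta> + \<gamma> - 2*lm))"
      by (simp add: power2_eq_square)
    also have "sqrt \<dots> = (\<beta> - lm) * b" unfolding b_def using \<beta>0 lam by (subst real_sqrt_mult) simp
    finally show ?thesis .
  qed

  have nn: "\<forall>i<?N. \<forall>j<?N. 0 \<le> ?M i j"
  proof (intro allI impI)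
    fix i j assume i: "i < ?N" and j: "j < ?N"
    show "0 \<le> ?M i j"
      by (rule all_glue2[OF _ _ _ _ i j]) (use Bnn Cnn unn vnn \<rho>0 in auto)
  qed
  have cs: "\<forall>i<?N. \<forall>j<?N. ?M (?N-1-i) (?N-1-j) = ?M i j"
  proof (intro allI impI)
    fix i j assume i: "i < ?N" and j: "j < ?N"
    show "?M (?N-1-i) (?N-1-j) = ?M i j"
    proof (rule all_glue2[OF _ _ _ _ i j])
      fix k k' assume "k < 2*p" "k' < 2*p"
      then show "?M (?N-1-emb p c k) (?N-1-emb p c k') = ?M (emb p c k) (emb p c k')"
        using Bcs by (simp add: rev_emb')
    next
      fix k j assume kj: "k < 2*p" "j < c"
      have cj: "c - 1 - j < c" using kj by auto
      have e1: "?N-1-emb p c k = emb p c (2*p-1-k)" by (rule rev_emb[OF kj(1)])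
      have e2: "?N-1-(p+j) = p + (c-1-j)" by (rule rev_mid[OF kj(2)])
      have "?M (?N-1-emb p c k) (?N-1-(p+j)) = \<rho> * u (2*p-1-k) * v (c-1-j)"
        unfolding e1 e2 by (rule glue_entries(2)[OF cj])
      also have "\<dots> = \<rho> * u k * v j" using usym vsym kj by simp
      finally show "?M (?N-1-emb p c k) (?N-1-(p+j)) = ?M (emb p c k) (p+j)"
        using kj by simp
    next
      fix k j assume kj: "k < 2*p" "j < c"
      have cj: "c - 1 - j < c" using kj by auto
      have e1: "?N-1-emb p c k = emb p c (2*p-1-k)" by (rule rev_emb[OF kj(1)])
      have e2: "?N-1-(p+j) = p + (c-1-j)" by (rule rev_mid[OF kj(2)])
      have "?M (?N-1-(p+j)) (?N-1-emb p c k) = \<rho> * v (c-1-j) * u (2*p-1-k)"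
        unfolding e1 e2 by (rule glue_entries(3)[OF cj])
      also have "\<dots> = \<rho> * v j * u k" using usym vsym kj by simp
      finally show "?M (?N-1-(p+j)) (?N-1-emb p c k) = ?M (p+j) (emb p c k)"
        using kj by simp
    next
      fix j j' assume jj: "j < c" "j' < c"
      have cj: "c - 1 - j < c" "c - 1 - j' < c" using jj by auto
      have e2: "?N-1-(p+j) = p + (c-1-j)" by (rule rev_mid[OF jj(1)])
      have e3: "?N-1-(p+j') = p + (c-1-j')" by (rule rev_mid[OF jj(2)])
      have "?M (?N-1-(p+j)) (?N-1-(p+j')) = C (c-1-j) (c-1-j')"
        unfolding e2 e3 by (rule glue_entries(4)[OF cj])
      also have "\<dots> = C j j'" using Ccs jj by simp
      finally show "?M (?N-1-(p+j)) (?N-1-(p+j')) = ?M (p+j) (p+j')"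
        using jj by simp
    qed
  qed
  have u'nn: "\<forall>i<?N. 0 \<le> ?u i"
  proof (intro allI impI)
    fix i assume i: "i < ?N"
    show "0 \<le> ?u i" by (rule all_glue[OF _ _ i]) (use unn vnn a0 b0 in auto)
  qed
  have u'sym: "\<forall>i<?N. ?u (?N-1-i) = ?u i"
  proof (intro allI impI)
    fix i assume i: "i < ?N"
    show "?u (?N-1-i) = ?u i"
    proof (rule all_glue[OF _ _ i])
      fix k assume "k < 2*p" then show "?u (?N-1-emb p c k) = ?u (emb p c k)"
        using usym by (simp add: rev_emb')
    next
      fix j assume j: "j < c"
      have cj: "c - 1 - j < c" using j by auto
      have e2: "?N-1-(p+j) = p + (c-1-j)" by (rule rev_mid[OF j])
      show "?u (?N-1-(p+j)) = ?u (p+j)"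
        unfolding e2 using pad_simps(2)[OF cj, of p u] pad_simps(4)[OF cj, of p v] vsym j by simp
    qed
  qed
  have u'2: "(\<Sum>i<?N. (?u i)^2) = 1"
  proof -
    have "(\<Sum>i<?N. (?u i)^2) = (\<Sum>k<2*p. a^2 * (u k)^2) + (\<Sum>j<c. b^2 * (v j)^2)"
      by (simp add: sum_glue power_mult_distrib)
    also have "\<dots> = a^2 + b^2" using u2 v2 by (simp add: sum_distrib_left[symmetric])
    finally show ?thesis using ab1 by simp
  qed
  have u'e: "\<forall>i<?N. (\<Sum>j<?N. ?M i j * ?u j) = (\<beta> + \<gamma> - lm) * ?u i"
  proof (intro allI impI)
    fix i assume i: "i < ?N"
    show "(\<Sum>j<?N. ?M i j * ?u j) = (\<beta> + \<gamma> - lm) * ?u i"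
    proof (rule all_glue[OF _ _ i])
      fix k assume k: "k < 2*p"
      have "(\<Sum>j<?N. ?M (emb p c k) j * ?u j) = (\<Sum>k'<2*p. B k k' * (a * u k')) + (\<Sum>j<c. \<rho> * u k * v j * (b * v j))"
        by (simp add: sum_glue)
      also have "(\<Sum>k'<2*p. B k k' * (a * u k')) = a * (\<Sum>k'<2*p. B k k' * u k')"
        by (simp add: sum_distrib_left mult_ac)
      also have "(\<Sum>j<c. \<rho> * u k * v j * (b * v j)) = \<rho> * b * u k * (\<Sum>j<c. (v j)^2)"
        by (simp add: sum_distrib_left mult_ac power2_eq_square)
      finally show "(\<Sum>j<?N. ?M (emb p c k) j * ?u j) = (\<beta> + \<gamma> - lm) * ?u (emb p c k)"
        using ue k v2 R1 by (simp add: algebra_simps)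
    next
      fix j0 assume j0: "j0 < c"
      have "(\<Sum>j<?N. ?M (p+j0) j * ?u j) = (\<Sum>k'<2*p. \<rho> * v j0 * u k' * (a * u k')) + (\<Sum>j<c. C j0 j * (b * v j))"
        using j0 by (simp add: sum_glue)
      also have "(\<Sum>j<c. C j0 j * (b * v j)) = b * (\<Sum>j<c. C j0 j * v j)"
        by (simp add: sum_distrib_left mult_ac)
      also have "(\<Sum>k'<2*p. \<rho> * v j0 * u k' * (a * u k')) = \<rho> * a * v j0 * (\<Sum>k'<2*p. (u k')^2)"
        by (simp add: sum_distrib_left mult_ac power2_eq_square)
      finally have s: "(\<Sum>j<?N. ?M (p+j0) j * ?u j) = \<rho> * a * v j0 * (\<Sum>k'<2*p. (u k')^2) + b * (\<Sum>j<c. C j0 j * v j)" .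
      have "\<rho> * a * v j0 * (\<Sum>k'<2*p. (u k')^2) + b * (\<Sum>j<c. C j0 j * v j) = (\<beta> + \<gamma> - lm) * (b * v j0)"
        using ve j0 u2 arg_cong[OF R2, of "\<lambda>x. x * v j0"] by (simp add: algebra_simps)
      then show "(\<Sum>j<?N. ?M (p+j0) j * ?u j) = (\<beta> + \<gamma> - lm) * ?u (p+j0)"
        using s j0 by simp
    qed
  qed

  let ?LB = "map (\<lambda>q. (fst q, padB p c (snd q))) LB"
  let ?LC = "map (\<lambda>q. (fst q, padC p c (snd q))) LC"
  let ?mx = "(complex_of_real lm, \<lambda>i. complex_of_real (?x i))"
  have xe: "\<forall>i<?N. (\<Sum>j<?N. ?M i j * ?x j) = lm * ?x i"
  proof (intro allI impI)
    fix i assume i: "i < ?N"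
    show "(\<Sum>j<?N. ?M i j * ?x j) = lm * ?x i"
    proof (rule all_glue[OF _ _ i])
      fix k assume k: "k < 2*p"
      have "(\<Sum>j<?N. ?M (emb p c k) j * ?x j) = (\<Sum>k'<2*p. B k k' * (- b * u k')) + (\<Sum>j<c. \<rho> * u k * v j * (a * v j))"
        by (simp add: sum_glue)
      also have "(\<Sum>k'<2*p. B k k' * (- b * u k')) = - b * (\<Sum>k'<2*p. B k k' * u k')"
        by (simp add: sum_distrib_left mult_ac sum_negf)
      also have "(\<Sum>j<c. \<rho> * u k * v j * (a * v j)) = \<rho> * a * u k * (\<Sum>j<c. (v j)^2)"
        by (simp add: sum_distrib_left mult_ac power2_eq_square)
      finally have s: "(\<Sum>j<?N. ?M (emb p c k) j * ?x j) = - b * (\<Sum>k'<2*p. B k k' * u k') + \<rho> * a * u k * (\<Sum>j<c. (v j)^2)" .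
      have "- b * (\<Sum>k'<2*p. B k k' * u k') + \<rho> * a * u k * (\<Sum>j<c. (v j)^2) = lm * (- b * u k)"
        using ue k v2 arg_cong[OF R2, of "\<lambda>x. x * u k"] by (simp add: algebra_simps)
      then show "(\<Sum>j<?N. ?M (emb p c k) j * ?x j) = lm * ?x (emb p c k)" using s by simp
    next
      fix j0 assume j0: "j0 < c"
      have "(\<Sum>j<?N. ?M (p+j0) j * ?x j) = (\<Sum>k'<2*p. \<rho> * v j0 * u k' * (- b * u k')) + (\<Sum>j<c. C j0 j * (a * v j))"
        using j0 by (simp add: sum_glue)
      also have "(\<Sum>j<c. C j0 j * (a * v j)) = a * (\<Sum>j<c. C j0 j * v j)"
        by (simp add: sum_distrib_left mult_ac)
      also have "(\<Sum>k'<2*p. \<rho> * v j0 * u k' * (- b * u k')) = - \<rho> * b * v j0 * (\<Sum>k'<2*p. (u k')^2)"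
        by (simp add: sum_distrib_left mult_ac power2_eq_square sum_negf)
      finally have s: "(\<Sum>j<?N. ?M (p+j0) j * ?x j) = - \<rho> * b * v j0 * (\<Sum>k'<2*p. (u k')^2) + a * (\<Sum>j<c. C j0 j * v j)" .
      have "- \<rho> * b * v j0 * (\<Sum>k'<2*p. (u k')^2) + a * (\<Sum>j<c. C j0 j * v j) = lm * (a * v j0)"
        using ve j0 u2 arg_cong[OF R1, of "\<lambda>x. x * v j0"] by (simp add: algebra_simps)
      then show "(\<Sum>j<?N. ?M (p+j0) j * ?x j) = lm * ?x (p+j0)"
        using s j0 by simp
    qed
  qed
  have cuB: "(\<Sum>k<2*p. cnj (snd q k) * complex_of_real (u k)) = 0" if "q \<in> set LB" for q
  proof -
    have "cnj (\<Sum>k<2*p. complex_of_real (u k) * snd q k) = 0" using uoB that by simp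
    then show ?thesis by (simp add: mult.commute)
  qed
  have cvC: "(\<Sum>k<c. cnj (snd q k) * complex_of_real (v k)) = 0" if "q \<in> set LC" for q
  proof -
    have "cnj (\<Sum>k<c. complex_of_real (v k) * snd q k) = 0" using voC that by simp
    then show ?thesis by (simp add: mult.commute)
  qed
  have eLB: "\<forall>q\<in>set ?LB. \<forall>i<?N. (\<Sum>j<?N. complex_of_real (?M i j) * snd q j) = fst q * snd q i"
  proof (intro ballI allI impI)
    fix q i assume q: "q \<in> set ?LB" and i: "i < ?N"
    then obtain q0 where q0: "q0 \<in> set LB" "q = (fst q0, padB p c (snd q0))" by auto
    show "(\<Sum>j<?N. complex_of_real (?M i j) * snd q j) = fst q * snd q i"
    proof (rule all_glue[OF _ _ i])
      fix k assume k: "k < 2*p"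
      show "(\<Sum>j<?N. complex_of_real (?M (emb p c k) j) * snd q j) = fst q * snd q (emb p c k)"
        using q0 LBe k by (simp add: sum_glue)
    next
      fix j0 assume j0: "j0 < c"
      have "(\<Sum>j<?N. complex_of_real (?M (p+j0) j) * snd q j)
          = (\<Sum>k<2*p. complex_of_real (\<rho> * v j0 * u k) * snd q0 k)"
        using q0 j0 by (simp add: sum_glue)
      also have "\<dots> = complex_of_real (\<rho> * v j0) * (\<Sum>k<2*p. complex_of_real (u k) * snd q0 k)"
        by (simp add: sum_distrib_left mult_ac)
      also have "\<dots> = 0" using uoB q0 by simp
      finally show "(\<Sum>j<?N. complex_of_real (?M (p+j0) j) * snd q j) = fst q * snd q (p+j0)"
        using q0 j0 by simp
    qed
  qed
  have eLC: "\<forall>q\<in>set ?LC. \<forall>i<?N. (\<Sum>j<?N. complex_of_real (?M i j) * snd q j) = fst q * snd q i"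
  proof (intro ballI allI impI)
    fix q i assume q: "q \<in> set ?LC" and i: "i < ?N"
    then obtain q0 where q0: "q0 \<in> set LC" "q = (fst q0, padC p c (snd q0))" by auto
    show "(\<Sum>j<?N. complex_of_real (?M i j) * snd q j) = fst q * snd q i"
    proof (rule all_glue[OF _ _ i])
      fix k assume k: "k < 2*p"
      have "(\<Sum>j<?N. complex_of_real (?M (emb p c k) j) * snd q j)
          = (\<Sum>j<c. complex_of_real (\<rho> * u k * v j) * snd q0 j)"
        using q0 by (simp add: sum_glue)
      also have "\<dots> = complex_of_real (\<rho> * u k) * (\<Sum>j<c. complex_of_real (v j) * snd q0 j)"
        by (simp add: sum_distrib_left mult_ac)
      also have "\<dots> = 0" using voC q0 by simp
      finally show "(\<Sum>j<?N. complex_of_real (?M (emb p c k) j) * snd q j) = fst q * snd q (emb p c k)"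
        using q0 by simp
    next
      fix j0 assume j0: "j0 < c"
      show "(\<Sum>j<?N. complex_of_real (?M (p+j0) j) * snd q j) = fst q * snd q (p+j0)"
        using q0 LCe j0 by (simp add: sum_glue)
    qed
  qed
  have eMX: "\<forall>i<?N. (\<Sum>j<?N. complex_of_real (?M i j) * snd ?mx j) = fst ?mx * snd ?mx i"
  proof (intro allI impI)
    fix i assume i: "i < ?N"
    have "(\<Sum>j<?N. complex_of_real (?M i j) * snd ?mx j) = complex_of_real (\<Sum>j<?N. ?M i j * ?x j)"
      by simp
    also have "\<dots> = complex_of_real (lm * ?x i)" using xe i by simp
    finally show "(\<Sum>j<?N. complex_of_real (?M i j) * snd ?mx j) = fst ?mx * snd ?mx i" by simp
  qed
  have x2: "(\<Sum>i<?N. (?x i)^2) = 1"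
  proof -
    have "(\<Sum>i<?N. (?x i)^2) = (\<Sum>k<2*p. b^2 * (u k)^2) + (\<Sum>j<c. a^2 * (v j)^2)"
      by (simp add: sum_glue power_mult_distrib)
    also have "\<dots> = b^2 + a^2" using u2 v2 by (simp add: sum_distrib_left[symmetric])
    finally show ?thesis using ab1 by simp
  qed
  have nLB: "\<forall>q\<in>set ?LB. ip ?N (snd q) (snd q) = 1" using LBn by (auto simp: ip_padBB)
  have nLC: "\<forall>q\<in>set ?LC. ip ?N (snd q) (snd q) = 1" using LCn by (auto simp: ip_padCC)
  have nMX: "ip ?N (snd ?mx) (snd ?mx) = 1"
  proof -
    have "ip ?N (snd ?mx) (snd ?mx) = complex_of_real (\<Sum>i<?N. (?x i)^2)"
      unfolding ip_def by (simp add: power2_eq_square)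
    then show ?thesis using x2 by (metis of_real_1)
  qed
  have oLB: "sorted_wrt (\<lambda>q r. ip ?N (snd q) (snd r) = 0) ?LB"
    using LBo by (simp add: sorted_wrt_map ip_padBB)
  have oLC: "sorted_wrt (\<lambda>q r. ip ?N (snd q) (snd r) = 0) ?LC"
    using LCo by (simp add: sorted_wrt_map ip_padCC)
  have oBC: "\<forall>q\<in>set ?LB. \<forall>r\<in>set ?LC. ip ?N (snd q) (snd r) = 0" by (auto simp: ip_padBC)
  have oBM: "\<forall>q\<in>set ?LB. ip ?N (snd q) (snd ?mx) = 0"
  proof
    fix q assume "q \<in> set ?LB"
    then obtain q0 where q0: "q0 \<in> set LB" "q = (fst q0, padB p c (snd q0))" by auto
    have "ip ?N (snd q) (snd ?mx) = (\<Sum>k<2*p. cnj (snd q0 k) * complex_of_real (- b * u k))"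
      unfolding ip_def using q0 by (simp add: sum_glue)
    also have "\<dots> = complex_of_real (- b) * (\<Sum>k<2*p. cnj (snd q0 k) * complex_of_real (u k))"
      by (simp add: sum_distrib_left mult_ac)
    finally show "ip ?N (snd q) (snd ?mx) = 0" using cuB[OF q0(1)] by simp
  qed
  have oCM: "\<forall>q\<in>set ?LC. ip ?N (snd q) (snd ?mx) = 0"
  proof
    fix q assume "q \<in> set ?LC"
    then obtain q0 where q0: "q0 \<in> set LC" "q = (fst q0, padC p c (snd q0))" by auto
    have "ip ?N (snd q) (snd ?mx) = (\<Sum>k<c. cnj (snd q0 k) * complex_of_real (a * v k))"
      unfolding ip_def using q0 by (simp add: sum_glue)
    also have "\<dots> = complex_of_real a * (\<Sum>k<c. cnj (snd q0 k) * complex_of_real (v k))"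
      by (simp add: sum_distrib_left mult_ac)
    finally show "ip ?N (snd q) (snd ?mx) = 0" using cvC[OF q0(1)] by simp
  qed
  have uLB: "\<forall>q\<in>set ?LB. (\<Sum>i<?N. complex_of_real (?u i) * snd q i) = 0"
  proof
    fix q assume "q \<in> set ?LB"
    then obtain q0 where q0: "q0 \<in> set LB" "q = (fst q0, padB p c (snd q0))" by auto
    have "(\<Sum>i<?N. complex_of_real (?u i) * snd q i) = (\<Sum>k<2*p. complex_of_real (a * u k) * snd q0 k)"
      using q0 by (simp add: sum_glue)
    also have "\<dots> = complex_of_real a * (\<Sum>k<2*p. complex_of_real (u k) * snd q0 k)"
      by (simp add: sum_distrib_left mult_ac)
    finally show "(\<Sum>i<?N. complex_of_real (?u i) * snd q i) = 0" using uoB q0 by simp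
  qed
  have uLC: "\<forall>q\<in>set ?LC. (\<Sum>i<?N. complex_of_real (?u i) * snd q i) = 0"
  proof
    fix q assume "q \<in> set ?LC"
    then obtain q0 where q0: "q0 \<in> set LC" "q = (fst q0, padC p c (snd q0))" by auto
    have "(\<Sum>i<?N. complex_of_real (?u i) * snd q i) = (\<Sum>k<c. complex_of_real (b * v k) * snd q0 k)"
      using q0 by (simp add: sum_glue)
    also have "\<dots> = complex_of_real b * (\<Sum>k<c. complex_of_real (v k) * snd q0 k)"
      by (simp add: sum_distrib_left mult_ac)
    finally show "(\<Sum>i<?N. complex_of_real (?u i) * snd q i) = 0" using voC q0 by simp
  qed
  have uMX: "(\<Sum>i<?N. complex_of_real (?u i) * snd ?mx i) = 0"
  proof -
    have "(\<Sum>i<?N. complex_of_real (?u i) * snd ?mx i) = complex_of_real (\<Sum>i<?N. ?u i * ?x i)" by simp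
    also have "(\<Sum>i<?N. ?u i * ?x i) = (\<Sum>k<2*p. (a * u k) * (- b * u k)) + (\<Sum>j<c. (b * v j) * (a * v j))"
      by (simp add: sum_glue)
    also have "\<dots> = (\<Sum>k<2*p. - (a * b) * (u k)^2) + (\<Sum>j<c. (a * b) * (v j)^2)"
      by (simp add: power2_eq_square mult_ac)
    also have "\<dots> = 0" using u2 v2 by (simp add: sum_distrib_left[symmetric] sum_negf)
    finally show ?thesis by simp
  qed
  have len: "length (?LB @ ?LC @ [?mx]) + 1 = ?N" using lenB lenC by simp
  show ?thesis
    unfolding good_def
    using nn cs u'nn u'sym u'2 u'e \<beta>0 \<gamma>0 lam len eLB eLC eMX nLB nLC nMX oLB oLC oBC oBM oCM uLB uLC uMX
    by (auto simp: sorted_wrt_append)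
qed



lemma less2_cases: "i < (2::nat) \<Longrightarrow> i = 0 \<or> i = 1" by auto

lemma good_C1: "good 1 (\<lambda>i j. 0) 0 (\<lambda>i. 1) []"
  unfolding good_def by simp

lemma good_C2:
  assumes "0 \<le> \<tau>"
  shows "good 2 (\<lambda>i j. if i = j then 0 else \<tau>) \<tau> (\<lambda>i. 1 / sqrt 2)
     [(complex_of_real (- \<tau>), \<lambda>i. if i = 0 then complex_of_real (1 / sqrt 2) else complex_of_real (- 1 / sqrt 2))]"
proof -
  have s2: "(\<Sum>i<2. f i) = f 0 + f (1::nat)" for f :: "nat \<Rightarrow> 'a::comm_monoid_add"
    by (simp add: numeral_2_eq_2)
  have r: "(1 / sqrt 2)^2 = (1/2::real)" by (simp add: power_divide)
  have c2: "(complex_of_real (sqrt 2))^2 = 2"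
  proof -
    have "(complex_of_real (sqrt 2))^2 = complex_of_real ((sqrt 2)^2)" by (simp only: of_real_power)
    then show ?thesis by simp
  qed
  show ?thesis
    unfolding good_def using assms
    by (auto simp: s2 ip_def r dest!: less2_cases) (simp_all add: power2_eq_square[symmetric] r c2)
qed



definition perm2 :: "nat \<Rightarrow> nat \<Rightarrow> nat" where "perm2 K i = (if i < K then i else 3*K - 1 - i)"

definition vS :: "nat \<Rightarrow> nat \<Rightarrow> nat \<Rightarrow> complex" where
  "vS K s i = cis (pi * real s * real (perm2 K i) / real K) / complex_of_real (sqrt (real (2*K)))"

lemma perm2_inv: "a < 2*K \<Longrightarrow> perm2 K (perm2 K a) = a" "a < 2*K \<Longrightarrow> perm2 K a < 2*K"
  unfolding perm2_def by auto

lemma sum_perm2: "(\<Sum>i<2*K. f (perm2 K i)) = (\<Sum>x<2*K. f x)"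
  by (rule sum.reindex_bij_witness[where i="perm2 K" and j="perm2 K"]) (auto simp: perm2_inv)

lemma vS_prod:
  assumes "0 < K"
  shows "cnj (vS K s i) * vS K t i = cis (pi * (real t - real s) / real K) ^ (perm2 K i) / of_nat (2*K)"
proof -
  have r: "complex_of_real (sqrt (real (2*K))) * complex_of_real (sqrt (real (2*K))) = of_nat (2*K)"
  proof -
    have "sqrt (real (2*K)) * sqrt (real (2*K)) = real (2*K)" by simp
    then show ?thesis by (metis of_real_mult of_real_of_nat_eq)
  qed
  have "cnj (vS K s i) * vS K t i
     = cis (- (pi * real s * real (perm2 K i) / real K)) * cis (pi * real t * real (perm2 K i) / real K)
       / (complex_of_real (sqrt (real (2*K))) * complex_of_real (sqrt (real (2*K))))"
    unfolding vS_def by (simp add: cis_cnj)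
  also have "cis (- (pi * real s * real (perm2 K i) / real K)) * cis (pi * real t * real (perm2 K i) / real K)
      = cis (real (perm2 K i) * (pi * (real t - real s) / real K))"
    by (simp add: cis_mult algebra_simps add_divide_distrib diff_divide_distrib)
  also have "\<dots> = cis (pi * (real t - real s) / real K) ^ (perm2 K i)" by (simp add: DeMoivre)
  finally show ?thesis unfolding r .
qed

lemma cis_ne_1:
  assumes K: "0 < K" and st: "s < 2*K" "t < 2*K" "s \<noteq> t"
  shows "cis (pi * (real t - real s) / real K) \<noteq> 1"
proof
  assume "cis (pi * (real t - real s) / real K) = 1"
  then have "cos (pi * (real t - real s) / real K) = 1" by (metis cis.simps(1) one_complex.simps(1))
  then obtain k :: int where k: "pi * (real t - real s) / real K = real_of_int k * 2 * pi"
    by (auto simp: cos_one_2pi_int)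
  then have "pi * (real t - real s) = pi * (2 * real K * real_of_int k)" using K by (simp add: field_simps)
  then have "real t - real s = 2 * real K * real_of_int k" by (metis mult_left_cancel pi_neq_zero)
  moreover have "\<bar>real t - real s\<bar> < 2 * real K" using st by auto
  ultimately have "\<bar>real_of_int k\<bar> < 1" using K by (simp add: abs_mult)
  then have "k = 0" by linarith
  then show False using \<open>real t - real s = 2 * real K * real_of_int k\<close> st(3) by simp
qed

lemma vS_orth:
  assumes K: "0 < K" and st: "s < 2*K" "t < 2*K"
  shows "ip (2*K) (vS K s) (vS K t) = (if s = t then 1 else 0)"
proof -
  let ?q = "cis (pi * (real t - real s) / real K)"
  have "ip (2*K) (vS K s) (vS K t) = (\<Sum>i<2*K. ?q ^ (perm2 K i) / of_nat (2*K))"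
    unfolding ip_def using vS_prod[OF K] by simp
  also have "\<dots> = (\<Sum>x<2*K. ?q ^ x / of_nat (2*K))" by (rule sum_perm2)
  also have "\<dots> = (\<Sum>x<2*K. ?q ^ x) / of_nat (2*K)" by (simp add: sum_divide_distrib)
  finally have e: "ip (2*K) (vS K s) (vS K t) = (\<Sum>x<2*K. ?q ^ x) / of_nat (2*K)" .
  show ?thesis
  proof (cases "s = t")
    case True
    then show ?thesis using e K by simp
  next
    case False
    have q1: "?q \<noteq> 1" by (rule cis_ne_1[OF K st False])
    have "?q ^ (2*K) = cis (real (2*K) * (pi * (real t - real s) / real K))" by (simp add: DeMoivre)
    also have "real (2*K) * (pi * (real t - real s) / real K) = 2 * pi * (real t - real s)"
      using K by (simp add: field_simps)
    also have "cis (2 * pi * (real t - real s)) = 1"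
    proof (rule cis_multiple_2pi)
      show "real t - real s \<in> \<int>" by (metis Ints_diff Ints_of_nat)
    qed
    finally have "?q ^ (2*K) = 1" .
    then have "(\<Sum>x<2*K. ?q ^ x) = 0" using q1 by (simp add: geometric_sum)
    then show ?thesis using e False by simp
  qed
qed



lemma vS_0: "vS K 0 i = complex_of_real (1 / sqrt (real (2*K)))"
  unfolding vS_def by simp

lemma vS_cnj:
  assumes "s < 2*K"
  shows "cnj (vS K s i) = vS K ((2*K - s) mod (2*K)) i"
proof (cases "s = 0")
  case True then show ?thesis by (simp add: vS_0)
next
  case False
  then have m: "(2*K - s) mod (2*K) = 2*K - s" using assms by simp
  have "real (2*K - s) = 2 * real K - real s" using assms by simp
  then have eqn: "pi * real (2*K - s) * real (perm2 K i) / real K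
      = 2 * pi * real (perm2 K i) + (- (pi * real s * real (perm2 K i) / real K))"
    using assms by (simp add: field_simps)
  have "cis (pi * real (2*K - s) * real (perm2 K i) / real K)
       = cis (2 * pi * real (perm2 K i)) * cis (- (pi * real s * real (perm2 K i) / real K))"
    by (subst eqn, rule cis_mult[symmetric])
  also have "cis (2 * pi * real (perm2 K i)) = 1" by (rule cis_multiple_2pi) simp
  finally show ?thesis unfolding m vS_def by (simp add: cis_cnj)
qed

lemma vS_shift:
  assumes "perm2 K i' = perm2 K i + K" "0 < K"
  shows "vS K s i' = (-1)^s * vS K s i"
proof -
  have "pi * real s * real (perm2 K i') / real K = real s * pi + pi * real s * real (perm2 K i) / real K"
    using assms by (simp add: field_simps)
  then have "cis (pi * real s * real (perm2 K i') / real K) = cis (real s * pi) * cis (pi * real s * real (perm2 K i) / real K)"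
    by (simp add: cis_mult)
  also have "cis (real s * pi) = (-1)^s" by (simp flip: DeMoivre add: cis_pi)
  finally show ?thesis unfolding vS_def by simp
qed

lemma vS_rev:
  assumes "i < 2*K" "0 < K"
  shows "vS K s (2*K - 1 - i) = (-1)^s * vS K s i"
proof (cases "i < K")
  case True
  then show ?thesis by (intro vS_shift) (use assms in \<open>auto simp: perm2_def\<close>)
next
  case False
  have "vS K s i = (-1)^s * vS K s (2*K - 1 - i)"
    by (intro vS_shift) (use assms False in \<open>auto simp: perm2_def\<close>)
  then have "(-1)^s * vS K s i = ((-1)^s * (-1)^s) * vS K s (2*K - 1 - i)" by simp
  also have "(-1)^s * (-1)^s = (1::complex)" by (simp flip: power_add)
  finally show ?thesis by simp
qed

lemma cmod_vS: "cmod (vS K s i) = 1 / sqrt (real (2*K))"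
  unfolding vS_def by (simp add: norm_divide)

lemma good_base:
  fixes d :: "nat \<Rightarrow> complex"
  assumes K: "0 < K"
    and d0: "d 0 = complex_of_real \<beta>" and \<beta>0: "0 \<le> \<beta>"
    and dc: "\<And>s. s < 2*K \<Longrightarrow> d ((2*K - s) mod (2*K)) = cnj (d s)"
    and bound: "(\<Sum>s\<in>{1..<2*K}. cmod (d s)) \<le> \<beta>"
  shows "good (2*K) (\<lambda>i j. Re (\<Sum>s<2*K. d s * vS K s i * cnj (vS K s j))) \<beta>
            (\<lambda>i. 1 / sqrt (real (2*K))) (map (\<lambda>s. (d s, vS K s)) [1..<2*K])"
proof -
  define S where "S i j = (\<Sum>s<2*K. d s * vS K s i * cnj (vS K s j))" for i j
  let ?M = "\<lambda>i j. Re (S i j)"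
  let ?u = "\<lambda>i::nat. 1 / sqrt (real (2*K))"
  define \<sigma> where "\<sigma> s = (2*K - s) mod (2*K)" for s
  have \<sigma>inv: "\<sigma> (\<sigma> s) = s" "\<sigma> s < 2*K" if "s < 2*K" for s
    using that K unfolding \<sigma>_def by (auto simp: mod_if)
  have Sreal: "cnj (S i j) = S i j" for i j
  proof -
    have "cnj (S i j) = (\<Sum>s<2*K. cnj (d s) * cnj (vS K s i) * vS K s j)"
      unfolding S_def by simp
    also have "\<dots> = (\<Sum>s<2*K. d (\<sigma> s) * vS K (\<sigma> s) i * cnj (vS K (\<sigma> s) j))"
    proof (intro sum.cong refl)
      fix s assume s: "s \<in> {..<2*K}"
      have "cnj (vS K (\<sigma> s) j) = vS K s j"
        using vS_cnj[of "\<sigma> s" K j] \<sigma>inv[of s] s by (simp add: \<sigma>_def)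
      then show "cnj (d s) * cnj (vS K s i) * vS K s j = d (\<sigma> s) * vS K (\<sigma> s) i * cnj (vS K (\<sigma> s) j)"
        using dc[of s] vS_cnj[of s K i] s unfolding \<sigma>_def by simp
    qed
    also have "\<dots> = S i j" unfolding S_def
      by (rule sum.reindex_bij_witness[where i=\<sigma> and j=\<sigma>]) (auto simp: \<sigma>inv)
    finally show ?thesis .
  qed
  have SR: "complex_of_real (?M i j) = S i j" for i j
  proof -
    have "Im (S i j) = 0" using Sreal[of i j] by (metis cnj.simps(2) neg_equal_zero)
    then show ?thesis by (simp add: complex_eq_iff)
  qed
  have eig: "(\<Sum>j<2*K. complex_of_real (?M i j) * vS K t j) = d t * vS K t i" if t: "t < 2*K" for i t
  proof -
    have "(\<Sum>j<2*K. complex_of_real (?M i j) * vS K t j)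
        = (\<Sum>j<2*K. \<Sum>s<2*K. d s * vS K s i * (cnj (vS K s j) * vS K t j))"
      by (simp only: SR) (simp add: S_def sum_distrib_left mult_ac)
    also have "\<dots> = (\<Sum>s<2*K. d s * vS K s i * (\<Sum>j<2*K. cnj (vS K s j) * vS K t j))"
      by (subst sum.swap) (simp add: sum_distrib_left)
    also have "\<dots> = (\<Sum>s<2*K. d s * vS K s i * (if s = t then 1 else 0))"
      using vS_orth[OF K _ t] unfolding ip_def by (intro sum.cong refl) auto
    also have "\<dots> = (\<Sum>s<2*K. if s = t then d t * vS K t i else 0)"
      by (intro sum.cong refl) auto
    also have "\<dots> = d t * vS K t i" using t by (simp add: sum.delta')
    finally show ?thesis .
  qed
  have v0: "vS K 0 i = complex_of_real (?u i)" for i by (rule vS_0)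
  have ue: "(\<Sum>j<2*K. ?M i j * ?u j) = \<beta> * ?u i" for i
  proof -
    have "complex_of_real (\<Sum>j<2*K. ?M i j * ?u j) = (\<Sum>j<2*K. complex_of_real (?M i j) * vS K 0 j)"
      unfolding v0 by simp
    also have "\<dots> = d 0 * vS K 0 i" using eig[of 0 i] K by simp
    also have "\<dots> = complex_of_real (\<beta> * ?u i)" unfolding d0 v0 by simp
    finally show ?thesis by (simp only: of_real_eq_iff)
  qed
  have r2K: "sqrt (real (2*K)) * sqrt (real (2*K)) = real (2*K)" by simp
  have u2: "(\<Sum>i<2*K. (?u i)^2) = 1"
    using K by (simp add: power_divide)
  have nn: "0 \<le> ?M i j" for i j
  proof -
    have split: "S i j = d 0 * vS K 0 i * cnj (vS K 0 j) + (\<Sum>s\<in>{1..<2*K}. d s * vS K s i * cnj (vS K s j))"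
    proof -
      have "{..<2*K} = insert 0 {1..<2*K}" using K by auto
      then show ?thesis unfolding S_def by simp
    qed
    have t0: "Re (d 0 * vS K 0 i * cnj (vS K 0 j)) = \<beta> / real (2*K)"
      unfolding d0 v0 using K by (simp add: power2_eq_square[symmetric] power_divide)
    have "\<bar>Re (\<Sum>s\<in>{1..<2*K}. d s * vS K s i * cnj (vS K s j))\<bar>
        \<le> cmod (\<Sum>s\<in>{1..<2*K}. d s * vS K s i * cnj (vS K s j))" by (rule abs_Re_le_cmod)
    also have "\<dots> \<le> (\<Sum>s\<in>{1..<2*K}. cmod (d s * vS K s i * cnj (vS K s j)))" by (rule norm_sum)
    also have "\<dots> = (\<Sum>s\<in>{1..<2*K}. cmod (d s) / real (2*K))"
      by (intro sum.cong refl) (simp add: norm_mult cmod_vS power2_eq_square[symmetric] power_divide)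
    also have "\<dots> = (\<Sum>s\<in>{1..<2*K}. cmod (d s)) / real (2*K)" by (simp add: sum_divide_distrib)
    also have "\<dots> \<le> \<beta> / real (2*K)" using bound K by (simp add: divide_right_mono)
    finally have "\<bar>Re (\<Sum>s\<in>{1..<2*K}. d s * vS K s i * cnj (vS K s j))\<bar> \<le> \<beta> / real (2*K)" .
    then show ?thesis unfolding split using t0 by simp
  qed
  have cs: "?M (2*K-1-i) (2*K-1-j) = ?M i j" if "i < 2*K" "j < 2*K" for i j
  proof -
    have "S (2*K-1-i) (2*K-1-j) = S i j" unfolding S_def
    proof (intro sum.cong refl)
      fix s
      have "((-1)^s * (-1)^s :: complex) = 1" by (simp flip: power_add)
      then show "d s * vS K s (2*K-1-i) * cnj (vS K s (2*K-1-j)) = d s * vS K s i * cnj (vS K s j)"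
        unfolding vS_rev[OF that(1) K] vS_rev[OF that(2) K] by (simp add: mult_ac)
    qed
    then show ?thesis by simp
  qed
  have lenL: "length (map (\<lambda>s. (d s, vS K s)) [1..<2*K]) + 1 = 2*K" using K by simp
  have eL: "\<forall>q\<in>set (map (\<lambda>s. (d s, vS K s)) [1..<2*K]). \<forall>i<2*K.
      (\<Sum>j<2*K. complex_of_real (?M i j) * snd q j) = fst q * snd q i"
    using eig by auto
  have nL: "\<forall>q\<in>set (map (\<lambda>s. (d s, vS K s)) [1..<2*K]). ip (2*K) (snd q) (snd q) = 1"
    using vS_orth[OF K] by auto
  have oL: "sorted_wrt (\<lambda>q r. ip (2*K) (snd q) (snd r) = 0) (map (\<lambda>s. (d s, vS K s)) [1..<2*K])"
    unfolding sorted_wrt_map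
    by (rule sorted_wrt_mono_rel[OF _ sorted_wrt_upt]) (use vS_orth[OF K] in auto)
  have uL: "\<forall>q\<in>set (map (\<lambda>s. (d s, vS K s)) [1..<2*K]). (\<Sum>i<2*K. complex_of_real (?u i) * snd q i) = 0"
  proof
    fix q assume "q \<in> set (map (\<lambda>s. (d s, vS K s)) [1..<2*K])"
    then obtain s where s: "1 \<le> s" "s < 2*K" "q = (d s, vS K s)" by auto
    have "(\<Sum>i<2*K. complex_of_real (?u i) * snd q i) = ip (2*K) (vS K 0) (vS K s)"
      unfolding ip_def s(3) v0 by simp
    also have "\<dots> = 0" using vS_orth[OF K, of 0 s] s K by simp
    finally show "(\<Sum>i<2*K. complex_of_real (?u i) * snd q i) = 0" .
  qed
  show ?thesis
    unfolding good_def S_def[symmetric]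
    using nn cs ue u2 \<beta>0 lenL eL nL oL uL by auto
qed



type_synonym st = "(nat\<Rightarrow>nat\<Rightarrow>real) \<times> real \<times> (nat\<Rightarrow>real) \<times> (complex \<times> (nat \<Rightarrow> complex)) list"

definition goodS :: "nat \<Rightarrow> st \<Rightarrow> bool" where
  "goodS N s = good N (fst s) (fst (snd s)) (fst (snd (snd s))) (snd (snd (snd s)))"
definition betaS :: "st \<Rightarrow> real" where "betaS s = fst (snd s)"
definition eigS :: "st \<Rightarrow> complex list" where "eigS s = map fst (snd (snd (snd s)))"

definition glueS :: "nat \<Rightarrow> nat \<Rightarrow> st \<Rightarrow> st \<Rightarrow> real \<Rightarrow> st" where
 "glueS p c sB sC lm = (case sB of (B,\<beta>,u,LB) \<Rightarrow> case sC of (C,\<gamma>,v,LC) \<Rightarrow>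
    (let \<rho> = sqrt ((\<beta> - lm) * (\<gamma> - lm)); a = sqrt ((\<beta> - lm) / (\<beta> + \<gamma> - 2*lm));
         b = sqrt ((\<gamma> - lm) / (\<beta> + \<gamma> - 2*lm)) in
    (glueM p c B C \<rho> u v, \<beta> + \<gamma> - lm, \<lambda>i. a * padB p c u i + b * padC p c v i,
     map (\<lambda>q. (fst q, padB p c (snd q))) LB @ map (\<lambda>q. (fst q, padC p c (snd q))) LC @
           [(complex_of_real lm, \<lambda>i. complex_of_real (- b * padB p c u i + a * padC p c v i))])))"

lemma glueS_props:
  assumes "goodS (2*p) sB" "goodS c sC" "lm < 0"
  shows "goodS (2*p+c) (glueS p c sB sC lm)" "betaS (glueS p c sB sC lm) = betaS sB + betaS sC - lm"
    "eigS (glueS p c sB sC lm) = eigS sB @ eigS sC @ [complex_of_real lm]"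
proof -
  obtain B \<beta> u LB where sB: "sB = (B,\<beta>,u,LB)" by (cases sB) auto
  obtain C \<gamma> v LC where sC: "sC = (C,\<gamma>,v,LC)" by (cases sC) auto
  show "goodS (2*p+c) (glueS p c sB sC lm)"
    using good_glue[of p B \<beta> u LB c C \<gamma> v LC lm] assms
    unfolding goodS_def glueS_def sB sC Let_def by simp
  show "betaS (glueS p c sB sC lm) = betaS sB + betaS sC - lm"
    unfolding betaS_def glueS_def sB sC Let_def by simp
  show "eigS (glueS p c sB sC lm) = eigS sB @ eigS sC @ [complex_of_real lm]"
    unfolding eigS_def glueS_def sB sC Let_def by (simp add: comp_def)
qed

definition C2S :: "real \<Rightarrow> st" where
  "C2S \<tau> = (\<lambda>i j. if i = j then 0 else \<tau>, \<tau>, \<lambda>i. 1 / sqrt 2,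
     [(complex_of_real (- \<tau>), \<lambda>i. if i = 0 then complex_of_real (1 / sqrt 2) else complex_of_real (- 1 / sqrt 2))])"
definition C1S :: st where "C1S = (\<lambda>i j. 0, 0, \<lambda>i. 1, [])"

lemma C2S_props: "0 \<le> \<tau> \<Longrightarrow> goodS 2 (C2S \<tau>)" "betaS (C2S \<tau>) = \<tau>" "eigS (C2S \<tau>) = [complex_of_real (- \<tau>)]"
  unfolding goodS_def betaS_def eigS_def C2S_def using good_C2 by auto
lemma C1S_props: "goodS 1 C1S" "betaS C1S = 0" "eigS C1S = []"
  unfolding goodS_def betaS_def eigS_def C1S_def using good_C1 by auto

primrec chainS :: "st \<Rightarrow> nat \<Rightarrow> (nat \<Rightarrow> real) \<Rightarrow> nat \<Rightarrow> st" where
  "chainS s0 K lam 0 = s0"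
| "chainS s0 K lam (Suc t) = glueS (K + t) 2 (chainS s0 K lam t) (C2S (- lam (2 + 2*t))) (lam (3 + 2*t))"

lemma chain_props:
  assumes g0: "goodS (2*K) s0" and neg: "\<And>j. 2 \<le> j \<Longrightarrow> j < 2 + 2*t \<Longrightarrow> lam j < 0"
  shows "goodS (2*(K+t)) (chainS s0 K lam t) \<and>
     betaS (chainS s0 K lam t) = betaS s0 - (\<Sum>j\<in>{2..<2+2*t}. lam j) \<and>
     mset (eigS (chainS s0 K lam t)) = mset (eigS s0) + mset (map (\<lambda>j. complex_of_real (lam j)) [2..<2+2*t])"
  using neg
proof (induction t)
  case 0
  then show ?case using g0 by simp
next
  case (Suc t)
  have IH: "goodS (2*(K+t)) (chainS s0 K lam t) \<and>
     betaS (chainS s0 K lam t) = betaS s0 - (\<Sum>j\<in>{2..<2+2*t}. lam j) \<and>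
     mset (eigS (chainS s0 K lam t)) = mset (eigS s0) + mset (map (\<lambda>j. complex_of_real (lam j)) [2..<2+2*t])"
    using Suc by auto
  have n2: "lam (2 + 2*t) < 0" and n3: "lam (3 + 2*t) < 0" using Suc.prems by auto
  have gC: "goodS 2 (C2S (- lam (2 + 2*t)))" using C2S_props(1) n2 by simp
  note G = glueS_props[of "K+t" "chainS s0 K lam t" 2 "C2S (- lam (2 + 2*t))" "lam (3 + 2*t)", OF _ gC n3]
  have gT: "goodS (2*(K+t)) (chainS s0 K lam t)" using IH by blast
  have e1: "2 * (K + t) + 2 = 2 * (K + Suc t)" by simp
  have g: "goodS (2*(K+Suc t)) (chainS s0 K lam (Suc t))"
    using G(1)[OF gT] unfolding e1 by simp
  have sE: "(\<Sum>j\<in>{2..<2+2*Suc t}. lam j) = (\<Sum>j\<in>{2..<2+2*t}. lam j) + lam (2+2*t) + lam (3+2*t)"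
  proof -
    have "2 + 2*Suc t = Suc (Suc (2+2*t))" by simp
    then have "(\<Sum>j\<in>{2..<2+2*Suc t}. lam j) = (\<Sum>j\<in>{2..<Suc (2+2*t)}. lam j) + lam (Suc (2+2*t))"
      by (simp only: sum.atLeastLessThan_Suc[of 2 "Suc (2+2*t)"])
    also have "(\<Sum>j\<in>{2..<Suc (2+2*t)}. lam j) = (\<Sum>j\<in>{2..<2+2*t}. lam j) + lam (2+2*t)"
      by (rule sum.atLeastLessThan_Suc) simp
    finally show ?thesis by (simp add: numeral_3_eq_3)
  qed
  have b: "betaS (chainS s0 K lam (Suc t)) = betaS s0 - (\<Sum>j\<in>{2..<2+2*Suc t}. lam j)"
  proof -
    have "betaS (chainS s0 K lam (Suc t)) = betaS (chainS s0 K lam t) + (- lam (2 + 2*t)) - lam (3 + 2*t)"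
      using G(2)[OF gT] C2S_props(2) by simp
    then show ?thesis unfolding sE using IH by simp
  qed
  have r2: "[2..<2+2*Suc t] = [2..<2+2*t] @ [2+2*t, 3+2*t]"
    by (simp add: numeral_3_eq_3)
  have e: "mset (eigS (chainS s0 K lam (Suc t))) = mset (eigS s0) + mset (map (\<lambda>j. complex_of_real (lam j)) [2..<2+2*Suc t])"
  proof -
    have "eigS (chainS s0 K lam (Suc t)) = eigS (chainS s0 K lam t) @ [complex_of_real (lam (2+2*t)), complex_of_real (lam (3+2*t))]"
      using G(3)[OF gT] C2S_props(3) by simp
    then show ?thesis unfolding r2 using IH by simp
  qed
  show ?case using g b e by blast
qed



lemma has_eig_perm:
  assumes "has_eigenvalues A es" "mset es = mset es'"
  shows "has_eigenvalues A es'"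
proof -
  have "(\<Prod>e\<leftarrow>es. [:- e, 1:]) = (\<Prod>e\<leftarrow>es'. [:- e, 1:])"
    by (metis assms(2) mset_map prod_mset_prod_list)
  then show ?thesis using assms(1) unfolding has_eigenvalues_def by simp
qed

lemma final_from_goodS:
  assumes "goodS N s" "mset (complex_of_real (betaS s) # eigS s) = mset es"
  shows "\<exists>A :: real mat. A \<in> carrier_mat N N \<and> nonneg_mat A \<and> centrosymmetric A \<and>
           normal_mat (map_mat complex_of_real A) \<and> has_eigenvalues (map_mat complex_of_real A) es"
proof -
  obtain M \<beta> u L where s: "s = (M, \<beta>, u, L)" by (cases s) auto
  have g: "good N M \<beta> u L" using assms(1) unfolding goodS_def s by simp
  note F = good_final[OF g]
  show ?thesis
    by (rule exI[of _ "mat N N (\<lambda>(i,j). M i j)"])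
       (use F has_eig_perm assms(2) in \<open>auto simp: s betaS_def eigS_def\<close>)
qed



lemma sum_list_mset_eq: "mset xs = mset ys \<Longrightarrow> sum_list (map f xs) = sum_list (map (f :: _ \<Rightarrow> real) ys)"
  by (metis mset_map sum_mset_sum_list)

theorem theorem3p15:
  fixes n m :: nat and lam :: "nat \<Rightarrow> real" and z :: "nat \<Rightarrow> complex"
  assumes "n \<ge> 3" and "m \<ge> 1"
    and "lam 0 \<ge> 0" and "0 > lam 1"
    and "\<And>j. 1 \<le> j \<Longrightarrow> j < n \<Longrightarrow> lam j \<ge> lam (Suc j)"
    and "\<And>j. 1 \<le> j \<Longrightarrow> j \<le> m \<Longrightarrow> Im (z j) > 0"
    and "lam 0 + (\<Sum>j = 1..n. lam j) - 2 * (\<Sum>j = 1..m. cmod (z j)) \<ge> 0"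
  shows "\<exists>A :: real mat. A \<in> carrier_mat (n + 2*m + 1) (n + 2*m + 1) \<and>
           nonneg_mat A \<and> centrosymmetric A \<and>
           normal_mat (map_mat complex_of_real A) \<and>
           has_eigenvalues (map_mat complex_of_real A)
             (map (\<lambda>j. complex_of_real (lam j)) [0..<n+1] @ map z [1..<m+1]
              @ map (\<lambda>j. cnj (z j)) [1..<m+1])"
proof -
  note n3 = assms(1) and mono = assms(5) and hyp = assms(7)
  define K where "K = m + 1"
  have K0: "0 < K" unfolding K_def by simp
  have neg_all: "\<forall>j. 1 \<le> j \<longrightarrow> j \<le> n \<longrightarrow> lam j < 0"
  proof
    fix j show "1 \<le> j \<longrightarrow> j \<le> n \<longrightarrow> lam j < 0"
    proof (induction j)
      case 0 then show ?case by simp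
    next
      case (Suc j)
      show ?case
      proof (cases "j = 0")
        case True then show ?thesis using assms(4) by simp
      next
        case False
        then show ?thesis using Suc mono[of j] by force
      qed
    qed
  qed
  then have neg: "\<And>j. 1 \<le> j \<Longrightarrow> j \<le> n \<Longrightarrow> lam j < 0" by blast
  define \<beta>S where "\<beta>S = lam 0 + (\<Sum>j\<in>{2..<n+1}. lam j)"
  define dS where "dS s = (if s = 0 then complex_of_real \<beta>S else if s = K then complex_of_real (lam 1)
      else if s < K then z s else cnj (z (2*K - s)))" for s
  define tgt where "tgt = complex_of_real (lam 1) # map z [1..<m+1] @ map (\<lambda>j. cnj (z j)) [1..<m+1]"
  have mD: "mset (map dS [1..<2*K]) = mset tgt"
  proof -
    have sp: "[1..<2*K] = [1..<K] @ K # [Suc K..<2*K]"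
    proof -
      have "[1..<2*K] = [1..<K] @ [K..<2*K]"
        using upt_add_eq_append[of 1 K K] K0 by (simp add: mult_2)
      also have "[K..<2*K] = K # [Suc K..<2*K]" using K0 by (simp add: upt_conv_Cons)
      finally show ?thesis .
    qed
    have m1: "map dS [1..<K] = map z [1..<m+1]"
      unfolding K_def by (intro map_cong) (auto simp: dS_def K_def)
    have m2: "map dS [Suc K..<2*K] = rev (map (\<lambda>j. cnj (z j)) [1..<m+1])"
    proof (rule nth_equalityI)
      show "length (map dS [Suc K..<2*K]) = length (rev (map (\<lambda>j. cnj (z j)) [1..<m+1]))"
        by (simp only: length_map length_upt length_rev K_def) simp
      fix i assume "i < length (map dS [Suc K..<2*K])"
      then have i: "i < m" by (simp only: length_map length_upt K_def) simp
      have i': "Suc K + i < 2*K" using i unfolding K_def by simp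
      have "map dS [Suc K..<2*K] ! i = dS (Suc K + i)" using i' by simp
      also have "\<dots> = cnj (z (m - i))" unfolding dS_def K_def using i by simp
      also have "\<dots> = rev (map (\<lambda>j. cnj (z j)) [1..<m+1]) ! i"
      proof -
        have "Suc (m - Suc i) = m - i" using i by simp
        then show ?thesis using i by (simp add: rev_nth del: upt_Suc)
      qed
      finally show "map dS [Suc K..<2*K] ! i = rev (map (\<lambda>j. cnj (z j)) [1..<m+1]) ! i" .
    qed
    have mK: "dS K = complex_of_real (lam 1)" unfolding dS_def using K0 by simp
    show ?thesis unfolding sp tgt_def using m1 m2 mK by simp
  qed
  have sumz: "(\<Sum>j\<in>{1..m}. cmod (z j)) = sum_list (map (\<lambda>j. cmod (z j)) [1..<m+1])"
  proof -
    have e: "{1..m} = set [1..<m+1]" by (auto simp del: upt_Suc)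
    show ?thesis unfolding e by (rule sum_set_upt_conv_sum_list_nat)
  qed
  have sumd: "(\<Sum>s\<in>{1..<2*K}. cmod (dS s)) = - lam 1 + 2 * (\<Sum>j\<in>{1..m}. cmod (z j))"
  proof -
    have "(\<Sum>s\<in>{1..<2*K}. cmod (dS s)) = sum_list (map cmod (map dS [1..<2*K]))"
      by (simp add: sum_set_upt_conv_sum_list_nat[symmetric])
    also have "\<dots> = sum_list (map cmod tgt)" by (rule sum_list_mset_eq[OF mD])
    also have "\<dots> = - lam 1 + 2 * (\<Sum>j\<in>{1..m}. cmod (z j))"
      unfolding tgt_def sumz using assms(4) by (simp add: comp_def)
    finally show ?thesis .
  qed
  have s1n: "(\<Sum>j = 1..n. lam j) = lam 1 + (\<Sum>j\<in>{2..<n+1}. lam j)"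
  proof -
    have "{1..n} = insert 1 {2..<n+1}" using n3 by auto
    then show ?thesis by simp
  qed
  have bound: "(\<Sum>s\<in>{1..<2*K}. cmod (dS s)) \<le> \<beta>S"
    unfolding sumd \<beta>S_def using hyp s1n by simp
  have \<beta>S0: "0 \<le> \<beta>S"
  proof -
    have "0 \<le> (\<Sum>s\<in>{1..<2*K}. cmod (dS s))" by (rule sum_nonneg) simp
    then show ?thesis using bound by simp
  qed
  have dc: "dS ((2*K - s) mod (2*K)) = cnj (dS s)" if "s < 2*K" for s
  proof -
    consider "s = 0" | "s = K" | "0 < s \<and> s < K" | "K < s" by linarith
    then show ?thesis
    proof cases
      case 1 then show ?thesis unfolding dS_def by simp
    next
      case 2 then show ?thesis unfolding dS_def using K0 by simp
    next
      case 3
      then have "(2*K - s) mod (2*K) = 2*K - s" using that by simp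
      then show ?thesis unfolding dS_def using 3 that by auto
    next
      case 4
      then have "(2*K - s) mod (2*K) = 2*K - s" using that by simp
      then show ?thesis unfolding dS_def using 4 that by auto
    qed
  qed
  define s0 :: st where "s0 = (\<lambda>i j. Re (\<Sum>s<2*K. dS s * vS K s i * cnj (vS K s j)), \<beta>S,
     \<lambda>i. 1 / sqrt (real (2*K)), map (\<lambda>s. (dS s, vS K s)) [1..<2*K])"
  have g0: "goodS (2*K) s0"
    unfolding goodS_def s0_def using good_base[OF K0 _ \<beta>S0 dc bound] by (simp add: dS_def)
  have b0: "betaS s0 = \<beta>S" unfolding betaS_def s0_def by simp
  have e0: "eigS s0 = map dS [1..<2*K]" unfolding eigS_def s0_def by simp
  have tg: "map (\<lambda>j. complex_of_real (lam j)) [0..<n+1] =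
      complex_of_real (lam 0) # complex_of_real (lam 1) # map (\<lambda>j. complex_of_real (lam j)) [2..<n+1]"
  proof -
    have "[0..<n+1] = 0 # 1 # [2..<n+1]"
      using upt_conv_Cons[of 0 "n+1"] upt_conv_Cons[of "Suc 0" "n+1"] n3
      by (simp del: upt_Suc add: numeral_2_eq_2)
    then show ?thesis by simp
  qed
  show ?thesis
  proof (cases "even n")
    case False
    define q where "q = n div 2"
    have nq: "n = 2*q + 1" using False unfolding q_def by presburger
    have C: "goodS (2*(K+q)) (chainS s0 K lam q) \<and>
     betaS (chainS s0 K lam q) = betaS s0 - (\<Sum>j\<in>{2..<2+2*q}. lam j) \<and>
     mset (eigS (chainS s0 K lam q)) = mset (eigS s0) + mset (map (\<lambda>j. complex_of_real (lam j)) [2..<2+2*q])"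
      by (rule chain_props[OF g0]) (use neg nq in auto)
    have sz: "2*(K+q) = n + 2*m + 1" unfolding K_def using nq by simp
    have up: "2 + 2*q = n + 1" using nq by simp
    show ?thesis
    proof (rule final_from_goodS)
      show "goodS (n + 2*m + 1) (chainS s0 K lam q)" using C sz by simp
      show "mset (complex_of_real (betaS (chainS s0 K lam q)) # eigS (chainS s0 K lam q)) =
        mset (map (\<lambda>j. complex_of_real (lam j)) [0..<n+1] @ map z [1..<m+1] @ map (\<lambda>j. cnj (z j)) [1..<m+1])"
        using C mD unfolding up b0 e0 tg \<beta>S_def tgt_def by simp
    qed
  next
    case True
    define q where "q = n div 2 - 1"
    have nq: "n = 2*q + 2" using True n3 unfolding q_def by presburger
    have C: "goodS (2*(K+q)) (chainS s0 K lam q) \<and>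
     betaS (chainS s0 K lam q) = betaS s0 - (\<Sum>j\<in>{2..<2+2*q}. lam j) \<and>
     mset (eigS (chainS s0 K lam q)) = mset (eigS s0) + mset (map (\<lambda>j. complex_of_real (lam j)) [2..<2+2*q])"
      by (rule chain_props[OF g0]) (use neg nq in auto)
    have ln: "lam n < 0" using neg n3 by simp
    note G = glueS_props[of "K+q" "chainS s0 K lam q" 1 C1S "lam n", OF _ C1S_props(1) ln]
    have sz: "2*(K+q) + 1 = n + 2*m + 1" unfolding K_def using nq by simp
    have up: "2 + 2*q = n" using nq by simp
    have sn: "(\<Sum>j\<in>{2..<n+1}. lam j) = (\<Sum>j\<in>{2..<n}. lam j) + lam n"
      using n3 by simp
    have upn: "[2..<n+1] = [2..<n] @ [n]" using n3 by simp
    show ?thesis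
    proof (rule final_from_goodS)
      show "goodS (n + 2*m + 1) (glueS (K+q) 1 (chainS s0 K lam q) C1S (lam n))"
        using G(1) C sz by simp
      show "mset (complex_of_real (betaS (glueS (K+q) 1 (chainS s0 K lam q) C1S (lam n))) #
          eigS (glueS (K+q) 1 (chainS s0 K lam q) C1S (lam n))) =
        mset (map (\<lambda>j. complex_of_real (lam j)) [0..<n+1] @ map z [1..<m+1] @ map (\<lambda>j. cnj (z j)) [1..<m+1])"
        using C mD G(2,3) C1S_props(2,3) C unfolding up b0 e0 tg \<beta>S_def tgt_def sn upn by simp
    qed
  qed
qed

end
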